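(* Let $G=(V,E)$ be a $k$-uniform hypergraph with $k\ge 3$. Let $U$ be a supervertex of $G$ with degree $d$ and $|U|\ge 2$. Let $\lambda\neq d$ be a Laplacian H-eigenvalue of $G$ and $\mathbf{x}$ a corresponding Laplacian H-eigenvector. Then for all $i,j\in U$ we have $|x_i|=|x_j|$; if moreover $k$ is odd, then $x_i=x_j$.
   Context: A $k$-uniform hypergraph $G=(V,E)$ has vertex set $V=[n]$ and a set $E$ of $k$-element subsets of $V$. For $i\in V$, $E_i$ is the set of edges containing $i$ and $d_i=|E_i|$ is its degree. For $i\in V$, the set $U=\{j\in V: E_j=E_i\}$ is called a supervertex; all its vertices have the same degree, called the degree of the supervertex. A Laplacian H-eigenvalue of $G$ is a real $\lambda$ for which there exists $\mathbf{x}\in\mathbb{R}^n\setminus\{0\}$ (a Laplacian H-eigenvector) with $\lambda x_i^{k-1}=d_ix_i^{k-1}-\sum_{e\in E_i}\prod_{j\in e\setminus\{i\}}x_j$ for all $i\in[n]$; equivalently, an H-eigenvalue of the Laplacian tensor $\mathcal{L}=\mathcal{D}-\mathcal{A}$, where $\mathcal{A}$ has entries $1/(k-1)!$ at $(i_1,\ldots,i_k)$ with $\{i_1,\ldots,i_k\}\in E$ and $0$ otherwise, and $\mathcal{D}$ is diagonal with entries $d_i$. *)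

theory Defs
  imports "HOL-Analysis.Analysis"
begin

definition uniform_hypergraph :: "nat \<Rightarrow> nat \<Rightarrow> nat set set \<Rightarrow> bool" where
  "uniform_hypergraph n k E \<longleftrightarrow> (\<forall>e\<in>E. e \<subseteq> {1..n} \<and> card e = k)"

definition edges_at :: "nat set set \<Rightarrow> nat \<Rightarrow> nat set set" where
  "edges_at E i = {e \<in> E. i \<in> e}"

definition hdegree :: "nat set set \<Rightarrow> nat \<Rightarrow> nat" where
  "hdegree E i = card (edges_at E i)"

definition supervertex_of :: "nat \<Rightarrow> nat set set \<Rightarrow> nat \<Rightarrow> nat set" where
  "supervertex_of n E i = {j \<in> {1..n}. edges_at E j = edges_at E i}"

definition is_supervertex :: "nat \<Rightarrow> nat set set \<Rightarrow> nat set \<Rightarrow> bool" where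
  "is_supervertex n E U \<longleftrightarrow> (\<exists>i\<in>{1..n}. U = supervertex_of n E i)"

definition lap_H_eigenpair :: "nat \<Rightarrow> nat \<Rightarrow> nat set set \<Rightarrow> real \<Rightarrow> (nat \<Rightarrow> real) \<Rightarrow> bool" where
  "lap_H_eigenpair n k E lam x \<longleftrightarrow>
     (\<exists>i\<in>{1..n}. x i \<noteq> 0) \<and>
     (\<forall>i\<in>{1..n}. lam * x i ^ (k - 1) =
        real (hdegree E i) * x i ^ (k - 1) - (\<Sum>e\<in>edges_at E i. \<Prod>j\<in>e - {i}. x j))"

definition lap_H_eigenvalue :: "nat \<Rightarrow> nat \<Rightarrow> nat set set \<Rightarrow> real \<Rightarrow> bool" where
  "lap_H_eigenvalue n k E lam \<longleftrightarrow> (\<exists>x. lap_H_eigenpair n k E lam x)"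

end

theory Submission
  imports Defs
begin

lemma key:
  fixes x :: "nat \<Rightarrow> real"
  assumes fin: "\<forall>e\<in>F. finite e" and ij: "\<forall>e\<in>F. i \<in> e \<and> j \<in> e" and "i \<noteq> j"
  shows "(\<Sum>e\<in>F. \<Prod>l\<in>e - {i}. x l) = x j * (\<Sum>e\<in>F. \<Prod>l\<in>e - {i} - {j}. x l)"
proof -
  have "(\<Prod>l\<in>e - {i}. x l) = x j * (\<Prod>l\<in>e - {i} - {j}. x l)" if "e \<in> F" for e
  proof -
    have "j \<in> e - {i}" using ij that assms(3) by auto
    moreover have "finite (e - {i})" using fin that by auto
    ultimately show ?thesis by (simp add: prod.remove)
  qed
  then show ?thesis by (simp add: sum_distrib_left)
qed

theorem theorem6p1:
  fixes n k d :: nat and E :: "nat set set" and U :: "nat set"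
    and lam :: real and x :: "nat \<Rightarrow> real"
  assumes "uniform_hypergraph n k E"
    and "k \<ge> 3"
    and "is_supervertex n E U"
    and "\<forall>i\<in>U. hdegree E i = d"
    and "card U \<ge> 2"
    and "lam \<noteq> real d"
    and "lap_H_eigenpair n k E lam x"
  shows "(\<forall>i\<in>U. \<forall>j\<in>U. \<bar>x i\<bar> = \<bar>x j\<bar>) \<and>
         (odd k \<longrightarrow> (\<forall>i\<in>U. \<forall>j\<in>U. x i = x j))"
proof -
  have pw: "x i ^ k = x j ^ k" if iU: "i \<in> U" and jU: "j \<in> U" for i j
  proof (cases "i = j")
    case True then show ?thesis by simp
  next
    case False
    obtain i0 where "i0 \<in> {1..n}" and U: "U = supervertex_of n E i0"
      using assms(3) unfolding is_supervertex_def by blast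
    have ii: "i \<in> {1..n}" "edges_at E i = edges_at E i0"
      and jj: "j \<in> {1..n}" "edges_at E j = edges_at E i0"
      using iU jU U unfolding supervertex_of_def by auto
    define F where "F = edges_at E i0"
    have fin: "\<forall>e\<in>F. finite e" using assms(1) unfolding F_def edges_at_def uniform_hypergraph_def
      by (auto intro: finite_subset)
    have mem: "\<forall>e\<in>F. i \<in> e \<and> j \<in> e"
      using ii(2) jj(2) unfolding F_def edges_at_def by blast
    have mem': "\<forall>e\<in>F. j \<in> e \<and> i \<in> e" using mem by blast
    define Q where "Q = (\<Sum>e\<in>F. \<Prod>l\<in>e - {i} - {j}. x l)"
    have Q': "(\<Sum>e\<in>F. \<Prod>l\<in>e - {j} - {i}. x l) = Q"
      unfolding Q_def by (simp add: Diff_insert2[symmetric] insert_commute)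
    have di: "hdegree E i = d" "hdegree E j = d" using assms(4) iU jU by auto
    have ei: "lam * x i ^ (k - 1) = real d * x i ^ (k - 1) - x j * Q"
      using assms(7) ii di key[OF fin mem False, of x] unfolding lap_H_eigenpair_def F_def Q_def
      by auto
    have ej: "lam * x j ^ (k - 1) = real d * x j ^ (k - 1) - x i * Q"
      using assms(7) jj di key[OF fin mem' ] False Q' unfolding lap_H_eigenpair_def F_def
      by auto
    define c where "c = real d - lam"
    have c0: "c \<noteq> 0" using assms(6) c_def by auto
    have a: "c * x i ^ (k - 1) = x j * Q" using ei unfolding c_def by (simp add: algebra_simps)
    have b: "c * x j ^ (k - 1) = x i * Q" using ej unfolding c_def by (simp add: algebra_simps)
    have k: "k = Suc (k - 1)" using assms(2) by simp
    have "c * x i ^ k = x i * (c * x i ^ (k - 1))" by (subst k) (simp add: algebra_simps)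
    also have "\<dots> = x j * (c * x j ^ (k - 1))" using a b by (simp add: algebra_simps)
    also have "\<dots> = c * x j ^ k" by (subst (2) k) (simp add: algebra_simps)
    finally show ?thesis using c0 by simp
  qed
  have "\<bar>x i\<bar> = \<bar>x j\<bar>" if "i \<in> U" "j \<in> U" for i j
  proof -
    have "\<bar>x i\<bar> ^ k = \<bar>x j\<bar> ^ k" using pw[OF that] by (metis power_abs)
    then show ?thesis using assms(2) by (simp add: power_eq_iff_eq_base)
  qed
  moreover have "x i = x j" if "odd k" "i \<in> U" "j \<in> U" for i j
  proof -
    have "\<bar>x i\<bar> = \<bar>x j\<bar>" using calculation that by blast
    then consider "x i = x j" | "x i = - x j" by linarith
    then show ?thesis
    proof cases
      case 2
      then have "x j ^ k = - (x j ^ k)" using pw[OF that(2,3)] that(1) by simp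
      then have "x j = 0" by simp
      then show ?thesis using 2 by simp
    qed simp
  qed
  ultimately show ?thesis by blast
qed

end
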